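(* If the knowledge connectivity graph belongs to $\mathcal{G}_{di}$, then the Sink algorithm executed by any correct process eventually terminates.
   Context: System: finite set $\Pi$ of processes, partially synchronous (unknown GST after which messages between correct processes arrive within $\delta$), Byzantine set $F$ with $|F|\le f$, correct set $C=\Pi\setminus F$, reliable authenticated channels, unforgeable signatures ($\langle m\rangle_i$ = $m$ signed by $i$). Each process $i$ has a participant detector $PD_i\subseteq\Pi$ and knows $f$; it may only message processes it currently knows. The knowledge connectivity graph is $G_{di}=(\Pi,\{(i,j):j\in PD_i\})$. $\kappa(H)$ denotes the largest $k$ such that every ordered pair of distinct vertices of digraph $H$ is joined by $k$ node-disjoint paths. A digraph belongs to $k$-OSR PD if its underlying undirected graph is connected, its condensation has exactly one sink component, that sink is $k$-strongly connected, and every vertex outside it has $k$ node-disjoint paths to every vertex in it. $G_{safe}=G_{di}[\Pi\setminus F]$. $\mathcal{G}_{di}$: graphs whose $G_{safe}$ is in $(f+1)$-OSR PD with safe sink of size $\ge 2f+1$. Discovery algorithm at $i$: sets $\mathcal{S}_{PD}=\{\langle i,PD_i\rangle_i\}$, $\mathcal{S}_{known}=PD_i\cup\{i\}$, $\mathcal{S}_{received}=\{i\}$; periodically send $\textsc{GetPDs}$ to all of $\mathcal{S}_{known}$; answer $\textsc{GetPDs}$ from $j$ with $\langle\textsc{SetPDs},\mathcal{S}_{PD}\rangle$; on $\langle\textsc{SetPDs},pds_j\rangle$ from $j$ containing a valid $\langle j,PD_j\rangle_j$, merge $pds_j$ into $\mathcal{S}_{PD}$, add all processes listed in the signed PDs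 to $\mathcal{S}_{known}$, and add all signers of those PDs to $\mathcal{S}_{received}$. Sink algorithm at $i$: start Discovery concurrently; wait until there is $R\subseteq\mathcal{S}_{received}$ such that, in the graph built from the PDs in $\mathcal{S}_{PD}$, $\kappa(R)\ge f+1$ and for every $K\subseteq(\mathcal{S}_{known}\cup\mathcal{S}_{received})\setminus R$, if there are more than $f$ node-disjoint paths from $R$ to $K$ then $|K|\le f$; then return $K\cup R$ if some $K\subseteq(\mathcal{S}_{known}\cup\mathcal{S}_{received})\setminus R$ receives more than $f$ node-disjoint paths from $R$, and return $R$ otherwise. *)

theory Defs
  imports Main
begin

text \<open>A digraph is given by an edge relation E; subgraphs are induced by a vertex set V.
  A path is a nonempty list of pairwise distinct vertices with consecutive vertices joined by edges.\<close>

definition is_path :: "('p \<times> 'p) set \<Rightarrow> 'p list \<Rightarrow> bool" where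
  "is_path E p \<longleftrightarrow> p \<noteq> [] \<and> distinct p \<and> successively (\<lambda>x y. (x, y) \<in> E) p"

definition disjoint_paths :: "('p \<times> 'p) set \<Rightarrow> 'p set \<Rightarrow> nat \<Rightarrow> 'p \<Rightarrow> 'p \<Rightarrow> bool" where
  "disjoint_paths E V k u v \<longleftrightarrow>
     (\<exists>P. finite P \<and> k \<le> card P \<and>
          (\<forall>p\<in>P. is_path E p \<and> set p \<subseteq> V \<and> hd p = u \<and> last p = v) \<and>
          (\<forall>p\<in>P. \<forall>q\<in>P. p \<noteq> q \<longrightarrow> set p \<inter> set q \<subseteq> {u, v}))"

text \<open>kappa(G[V]) >= k, i.e. G[V] is k-strongly connected.  Convention (as for complete
  graphs, kappa(K_n) = n-1): a graph with at most k vertices is not k-strongly connected.\<close>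
definition kappa_ge :: "('p \<times> 'p) set \<Rightarrow> 'p set \<Rightarrow> nat \<Rightarrow> bool" where
  "kappa_ge E V k \<longleftrightarrow> finite V \<and> k < card V \<and>
     (\<forall>u\<in>V. \<forall>v\<in>V. u \<noteq> v \<longrightarrow> disjoint_paths E V k u v)"

definition reach :: "('p \<times> 'p) set \<Rightarrow> 'p set \<Rightarrow> ('p \<times> 'p) set" where
  "reach E V = (E \<inter> V \<times> V)\<^sup>*"

definition is_scc :: "('p \<times> 'p) set \<Rightarrow> 'p set \<Rightarrow> 'p set \<Rightarrow> bool" where
  "is_scc E V S \<longleftrightarrow> S \<noteq> {} \<and> S \<subseteq> V \<and>
     (\<forall>u\<in>S. \<forall>v\<in>S. (u, v) \<in> reach E V) \<and>
     (\<forall>u\<in>S. \<forall>v\<in>V. (u, v) \<in> reach E V \<and> (v, u) \<in> reach E V \<longrightarrow> v \<in> S)"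

definition is_sink_comp :: "('p \<times> 'p) set \<Rightarrow> 'p set \<Rightarrow> 'p set \<Rightarrow> bool" where
  "is_sink_comp E V S \<longleftrightarrow> is_scc E V S \<and> (\<forall>u\<in>S. \<forall>v\<in>V. (u, v) \<in> E \<longrightarrow> v \<in> S)"

definition undirected_connected :: "('p \<times> 'p) set \<Rightarrow> 'p set \<Rightarrow> bool" where
  "undirected_connected E V \<longleftrightarrow> (\<forall>u\<in>V. \<forall>v\<in>V. (u, v) \<in> reach (E \<union> E\<inverse>) V)"

definition OSR_with_sink :: "nat \<Rightarrow> ('p \<times> 'p) set \<Rightarrow> 'p set \<Rightarrow> 'p set \<Rightarrow> bool" where
  "OSR_with_sink k E V S \<longleftrightarrow>
     undirected_connected E V \<and>
     (\<forall>S'. is_sink_comp E V S' \<longleftrightarrow> S' = S) \<and>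
     kappa_ge E S k \<and>
     (\<forall>u\<in>V - S. \<forall>v\<in>S. disjoint_paths E V k u v)"

definition in_OSR :: "nat \<Rightarrow> ('p \<times> 'p) set \<Rightarrow> 'p set \<Rightarrow> bool" where
  "in_OSR k E V \<longleftrightarrow> (\<exists>S. OSR_with_sink k E V S)"

definition Gdi_edges :: "('p \<Rightarrow> 'p set) \<Rightarrow> ('p \<times> 'p) set" where
  "Gdi_edges PD = {(i, j). j \<in> PD i}"

definition in_Gdi_class :: "('p \<Rightarrow> 'p set) \<Rightarrow> 'p set \<Rightarrow> nat \<Rightarrow> bool" where
  "in_Gdi_class PD C f \<longleftrightarrow>
     (\<exists>S. OSR_with_sink (Suc f) (Gdi_edges PD) C S \<and> 2 * f + 1 \<le> card S)"

text \<open>A signed participant detector <j, X>_j is represented by the pair (j, X).\<close>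
type_synonym 'p spd = "('p \<times> 'p set) set"

datatype 'p msg = GetPDs | SetPDs "'p spd"

text \<open>Valid SetPDs messages delivered to i at time t: sender j and payload containing an
  entry signed by j.\<close>
definition valid_in :: "(nat \<Rightarrow> ('p \<times> 'p \<times> 'p msg) set) \<Rightarrow> nat \<Rightarrow> 'p \<Rightarrow> ('p \<times> 'p spd) set" where
  "valid_in dlv t i = {(j, pds). (j, i, SetPDs pds) \<in> dlv t \<and> (\<exists>X. (j, X) \<in> pds)}"

text \<open>An execution in which all correct processes (C = UNIV - F) run Discovery (and Sink).
  sent t / dlv t: messages (source, destination, payload) sent / delivered at time t.
  spd, known, rcvd: the local sets S_PD, S_known, S_received of each process at time t
  (constrained only for correct processes).\<close>
definition discovery_run ::
  "('p \<Rightarrow> 'p set) \<Rightarrow> 'p set \<Rightarrow>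
   (nat \<Rightarrow> 'p \<Rightarrow> 'p spd) \<Rightarrow> (nat \<Rightarrow> 'p \<Rightarrow> 'p set) \<Rightarrow> (nat \<Rightarrow> 'p \<Rightarrow> 'p set) \<Rightarrow>
   (nat \<Rightarrow> ('p \<times> 'p \<times> 'p msg) set) \<Rightarrow> (nat \<Rightarrow> ('p \<times> 'p \<times> 'p msg) set) \<Rightarrow> bool" where
  "discovery_run PD F spd known rcvd sent dlv \<longleftrightarrow>
    (let C = - F in
     \<comment> \<open>initialisation\<close>
     (\<forall>i\<in>C. spd 0 i = {(i, PD i)} \<and> known 0 i = PD i \<union> {i} \<and> rcvd 0 i = {i}) \<and>
     \<comment> \<open>handling of valid SetPDs messages: merge S_PD, update S_known and S_received\<close>
     (\<forall>i\<in>C. \<forall>t.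
        spd (Suc t) i = spd t i \<union> (\<Union>(j, pds)\<in>valid_in dlv t i. pds) \<and>
        known (Suc t) i = known t i \<union> (\<Union>(j, pds)\<in>valid_in dlv t i. \<Union>(k, X)\<in>pds. X) \<and>
        rcvd (Suc t) i = rcvd t i \<union> (\<Union>(j, pds)\<in>valid_in dlv t i. fst ` pds)) \<and>
     \<comment> \<open>periodically send GetPDs to every known process\<close>
     (\<forall>i\<in>C. \<forall>t. \<forall>j\<in>known t i. \<exists>t'\<ge>t. (i, j, GetPDs) \<in> sent t') \<and>
     \<comment> \<open>answer every GetPDs with the current S_PD\<close>
     (\<forall>i\<in>C. \<forall>t j. (j, i, GetPDs) \<in> dlv t \<longrightarrow> (\<exists>t'\<ge>t. (i, j, SetPDs (spd t' i)) \<in> sent t')) \<and>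
     \<comment> \<open>correct processes send nothing else\<close>
     (\<forall>i\<in>C. \<forall>t j m. (i, j, m) \<in> sent t \<longrightarrow>
        (m = GetPDs \<and> j \<in> known t i) \<or>
        (m = SetPDs (spd t i) \<and> (\<exists>t'\<le>t. (j, i, GetPDs) \<in> dlv t'))) \<and>
     \<comment> \<open>authenticated channels: messages delivered from a correct source were sent by it\<close>
     (\<forall>i\<in>C. \<forall>t j m. (i, j, m) \<in> dlv t \<longrightarrow> (\<exists>t'\<le>t. (i, j, m) \<in> sent t')) \<and>
     \<comment> \<open>unforgeable signatures: Byzantine processes cannot forge the PD of a correct process\<close>
     (\<forall>b\<in>F. \<forall>i\<in>C. \<forall>t pds k X. (b, i, SetPDs pds) \<in> dlv t \<longrightarrow> (k, X) \<in> pds \<longrightarrow> k \<in> C \<longrightarrow>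
        X = PD k) \<and>
     \<comment> \<open>partial synchrony (includes reliability): there are GST and delta such that every
         message sent at t between correct processes is delivered by max t GST + delta\<close>
     (\<exists>GST \<delta>. \<forall>t i j m. i \<in> C \<longrightarrow> j \<in> C \<longrightarrow> (i, j, m) \<in> sent t \<longrightarrow>
        (\<exists>t'. t \<le> t' \<and> t' \<le> max t GST + \<delta> \<and> (i, j, m) \<in> dlv t')))"

definition pd_graph :: "'p spd \<Rightarrow> ('p \<times> 'p) set" where
  "pd_graph pds = {(j, k). \<exists>X. (j, X) \<in> pds \<and> k \<in> X}"

text \<open>K receives more than f (i.e. at least k = f+1) node-disjoint paths from R:
  every vertex v of K is the end of k paths starting in R that pairwise share only v.\<close>
definition receives_paths :: "('p \<times> 'p) set \<Rightarrow> 'p set \<Rightarrow> 'p set \<Rightarrow> nat \<Rightarrow> bool" where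
  "receives_paths E R K k \<longleftrightarrow>
     (\<forall>v\<in>K. \<exists>P. finite P \<and> k \<le> card P \<and>
        (\<forall>p\<in>P. is_path E p \<and> hd p \<in> R \<and> last p = v) \<and>
        (\<forall>p\<in>P. \<forall>q\<in>P. p \<noteq> q \<longrightarrow> set p \<inter> set q \<subseteq> {v}))"

definition sink_wait_cond :: "nat \<Rightarrow> 'p spd \<Rightarrow> 'p set \<Rightarrow> 'p set \<Rightarrow> bool" where
  "sink_wait_cond f pds kn rc \<longleftrightarrow>
     (\<exists>R \<subseteq> rc. kappa_ge (pd_graph pds) R (Suc f) \<and>
        (\<forall>K \<subseteq> (kn \<union> rc) - R. receives_paths (pd_graph pds) R K (Suc f) \<longrightarrow> card K \<le> f))"

end

theory Submission
  imports Defs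
begin

lemma succ_mono:
  "successively P xs \<Longrightarrow> (\<And>x y. x \<in> set xs \<Longrightarrow> y \<in> set xs \<Longrightarrow> P x y \<Longrightarrow> Q x y) \<Longrightarrow> successively Q xs"
  by (induction xs rule: induct_list012) auto

lemma path_reach:
  "successively (\<lambda>x y. (x, y) \<in> E) p \<Longrightarrow> p \<noteq> [] \<Longrightarrow> set p \<subseteq> V \<Longrightarrow> (hd p, last p) \<in> reach E V"
  unfolding reach_def
proof (induction p rule: induct_list012)
  case (3 x y xs)
  then have "(y, last (y # xs)) \<in> (E \<inter> V \<times> V)\<^sup>*" by auto
  moreover have "(x, y) \<in> E \<inter> V \<times> V" using 3 by auto
  ultimately show ?case by (auto intro: converse_rtrancl_into_rtrancl)
qed auto

lemma dp_mono:
  assumes "disjoint_paths E V k u v" "E \<inter> V \<times> V \<subseteq> E'"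
  shows "disjoint_paths E' V k u v"
proof -
  obtain P where P: "finite P" "k \<le> card P"
    "\<forall>p\<in>P. is_path E p \<and> set p \<subseteq> V \<and> hd p = u \<and> last p = v"
    "\<forall>p\<in>P. \<forall>q\<in>P. p \<noteq> q \<longrightarrow> set p \<inter> set q \<subseteq> {u, v}"
    using assms(1) unfolding disjoint_paths_def by blast
  have "\<forall>p\<in>P. is_path E' p"
  proof
    fix p assume "p \<in> P"
    then have "is_path E p" "set p \<subseteq> V" using P by auto
    then show "is_path E' p" unfolding is_path_def
      using succ_mono[of "\<lambda>x y. (x, y) \<in> E" p "\<lambda>x y. (x, y) \<in> E'"] assms(2) by blast
  qed
  then show ?thesis unfolding disjoint_paths_def using P by blast
qed

lemma path_exits:
  "successively (\<lambda>x y. (x, y) \<in> E) p \<Longrightarrow> p \<noteq> [] \<Longrightarrow> hd p \<in> S \<Longrightarrow> last p \<notin> S \<Longrightarrow>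
   (\<forall>a\<in>S. \<forall>b. (a, b) \<in> E \<longrightarrow> b \<in> S \<or> b \<in> F) \<Longrightarrow> \<exists>b\<in>set p. b \<in> F"
  by (induction p rule: induct_list012) auto

theorem theorem4:
  fixes PD :: "'p::finite \<Rightarrow> 'p set"
    and F :: "'p set"
    and f :: nat
    and spd :: "nat \<Rightarrow> 'p \<Rightarrow> 'p spd"
    and known rcvd :: "nat \<Rightarrow> 'p \<Rightarrow> 'p set"
    and sent dlv :: "nat \<Rightarrow> ('p \<times> 'p \<times> 'p msg) set"
  assumes "card F \<le> f"
    and "in_Gdi_class PD (- F) f"
    and "discovery_run PD F spd known rcvd sent dlv"
    and "i \<in> - F"
  shows "\<exists>t. sink_wait_cond f (spd t i) (known t i) (rcvd t i)"
proof -
  note D0 = assms(3)[unfolded discovery_run_def Let_def]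
  note D1 = conjunct1[OF D0] and R1 = conjunct2[OF D0]
  note D2 = conjunct1[OF R1] and R2 = conjunct2[OF R1]
  note D3 = conjunct1[OF R2] and R3 = conjunct2[OF R2]
  note D4 = conjunct1[OF R3] and R4 = conjunct2[OF R3]
  note D5 = conjunct1[OF R4] and R5 = conjunct2[OF R4]
  note D6 = conjunct1[OF R5] and R6 = conjunct2[OF R5]
  note D7 = conjunct1[OF R6] and D8 = conjunct2[OF R6]
  have init: "\<And>j. j \<notin> F \<Longrightarrow> spd 0 j = {(j, PD j)} \<and> known 0 j = PD j \<union> {j} \<and> rcvd 0 j = {j}"
    using D1 by auto
  have stp: "\<And>j t. j \<notin> F \<Longrightarrow>
        spd (Suc t) j = spd t j \<union> (\<Union>(j', pds)\<in>valid_in dlv t j. pds) \<and>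
        known (Suc t) j = known t j \<union> (\<Union>(j', pds)\<in>valid_in dlv t j. \<Union>(k, X)\<in>pds. X) \<and>
        rcvd (Suc t) j = rcvd t j \<union> (\<Union>(j', pds)\<in>valid_in dlv t j. fst ` pds)"
    using D2 by auto
  have per: "\<And>j t w. j \<notin> F \<Longrightarrow> w \<in> known t j \<Longrightarrow> \<exists>t'\<ge>t. (j, w, GetPDs) \<in> sent t'"
    using D3 by auto
  have ans: "\<And>j t w. j \<notin> F \<Longrightarrow> (w, j, GetPDs) \<in> dlv t \<Longrightarrow> (\<exists>t'\<ge>t. (j, w, SetPDs (spd t' j)) \<in> sent t')"
    using D4 by auto
  have only: "\<And>j t w m. j \<notin> F \<Longrightarrow> (j, w, m) \<in> sent t \<Longrightarrow>
        (m = GetPDs \<and> w \<in> known t j) \<or> (m = SetPDs (spd t j) \<and> (\<exists>t'\<le>t. (w, j, GetPDs) \<in> dlv t'))"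
    using D5 by auto
  have auth: "\<And>j t w m. j \<notin> F \<Longrightarrow> (j, w, m) \<in> dlv t \<Longrightarrow> (\<exists>t'\<le>t. (j, w, m) \<in> sent t')"
    using D6 by auto
  have unf: "\<And>b j t pds k X. b \<in> F \<Longrightarrow> j \<notin> F \<Longrightarrow> (b, j, SetPDs pds) \<in> dlv t \<Longrightarrow> (k, X) \<in> pds \<Longrightarrow> k \<notin> F \<Longrightarrow> X = PD k"
    using D7 by auto
  obtain GST \<delta> where sync: "\<And>t j w m. j \<notin> F \<Longrightarrow> w \<notin> F \<Longrightarrow> (j, w, m) \<in> sent t \<Longrightarrow>
        (\<exists>t'. t \<le> t' \<and> t' \<le> max t GST + \<delta> \<and> (j, w, m) \<in> dlv t')"
    using D8 unfolding Compl_iff by blast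

  have spd_mono: "spd t j \<subseteq> spd t' j" if "t \<le> t'" "j \<notin> F" for t t' j
    using lift_Suc_mono_le[of "\<lambda>t. spd t j"] stp[OF that(2)] that(1) by blast
  have known_mono: "known t j \<subseteq> known t' j" if "t \<le> t'" "j \<notin> F" for t t' j
    using lift_Suc_mono_le[of "\<lambda>t. known t j"] stp[OF that(2)] that(1) by blast
  have self_in: "(j, PD j) \<in> spd t j" if "j \<notin> F" for j t
    using spd_mono[of 0 t j] init[OF that] that by auto
  have rcvd_inv: "fst ` spd t j \<subseteq> rcvd t j" if "j \<notin> F" for j t
  proof (induction t)
    case 0 then show ?case using init[OF that] by auto
  next
    case (Suc t) then show ?case using stp[OF that, of t] by auto
  qed
  have sig: "\<forall>t'\<le>t. \<forall>j. j \<notin> F \<longrightarrow> (\<forall>k X. (k, X) \<in> spd t' j \<longrightarrow> k \<notin> F \<longrightarrow> X = PD k)" for t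
  proof (induction t)
    case 0 then show ?case using init by auto
  next
    case (Suc t)
    show ?case
    proof (intro allI impI)
      fix t' j k X
      assume a: "t' \<le> Suc t" "j \<notin> F" "(k, X) \<in> spd t' j" "k \<notin> F"
      show "X = PD k"
      proof (cases "t' \<le> t")
        case True then show ?thesis using Suc a by blast
      next
        case False
        then have "t' = Suc t" using a by auto
        then have "(k, X) \<in> spd t j \<or> (\<exists>(j', pds)\<in>valid_in dlv t j. (k, X) \<in> pds)"
          using a stp[OF a(2), of t] by auto
        then show ?thesis
        proof
          assume "(k, X) \<in> spd t j" then show ?thesis using Suc a by blast
        next
          assume "\<exists>(j', pds)\<in>valid_in dlv t j. (k, X) \<in> pds"
          then obtain j' pds where jp: "(j', j, SetPDs pds) \<in> dlv t" "(k, X) \<in> pds"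
            unfolding valid_in_def by auto
          show ?thesis
          proof (cases "j' \<in> F")
            case True then show ?thesis using unf jp a by blast
          next
            case False
            obtain t2 where t2: "t2 \<le> t" "(j', j, SetPDs pds) \<in> sent t2" using auth[OF False jp(1)] by blast
            then have "pds = spd t2 j'" using only[OF False t2(2)] by auto
            then show ?thesis using Suc t2 jp False a by blast
          qed
        qed
      qed
    qed
  qed
  have sigi: "\<And>t j k X. j \<notin> F \<Longrightarrow> (k, X) \<in> spd t j \<Longrightarrow> k \<notin> F \<Longrightarrow> X = PD k"
    using sig by blast

  have comm: "\<exists>T'. spd T w \<subseteq> spd T' u" if hh: "u \<notin> F" "w \<notin> F" "w \<in> PD u" for u w T
  proof -
    have "w \<in> known T u" using known_mono[of 0 T u] init[OF hh(1)] hh by auto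
    then obtain t1 where t1: "t1 \<ge> T" "(u, w, GetPDs) \<in> sent t1" using per[OF hh(1)] by blast
    then obtain t2 where t2: "t2 \<ge> t1" "(u, w, GetPDs) \<in> dlv t2" using sync[OF hh(1,2)] by blast
    then obtain t3 where t3: "t3 \<ge> t2" "(w, u, SetPDs (spd t3 w)) \<in> sent t3" using ans[OF hh(2)] by blast
    then obtain t4 where t4: "t4 \<ge> t3" "(w, u, SetPDs (spd t3 w)) \<in> dlv t4" using sync[OF hh(2,1)] by blast
    have "(w, spd t3 w) \<in> valid_in dlv t4 u" unfolding valid_in_def using t4 self_in[OF hh(2)] by auto
    then have "spd t3 w \<subseteq> spd (Suc t4) u" using stp[OF hh(1), of t4] by auto
    moreover have "T \<le> t3" using t1(1) t2(1) t3(1) by linarith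
    then have "spd T w \<subseteq> spd t3 w" using spd_mono[of T t3 w] hh(2) by blast
    ultimately show ?thesis by blast
  qed

  define E where "E = Gdi_edges PD"
  have reachT: "(u, w) \<in> reach E (- F) \<Longrightarrow> u \<notin> F \<Longrightarrow> \<exists>T. (w, PD w) \<in> spd T u" for u w
    unfolding reach_def
  proof (induction rule: converse_rtrancl_induct)
    case base then show ?case using self_in by blast
  next
    case (step u v)
    then have "v \<notin> F" "v \<in> PD u" by (auto simp: E_def Gdi_edges_def)
    then obtain T where "(w, PD w) \<in> spd T v" using step by blast
    then show ?case using comm[OF step(4) \<open>v \<notin> F\<close> \<open>v \<in> PD u\<close>, of T] by blast
  qed

  obtain S where S: "OSR_with_sink (Suc f) E (- F) S" "2 * f + 1 \<le> card S"
    using assms(2) unfolding in_Gdi_class_def E_def by blast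
  have sinkc: "is_sink_comp E (- F) S" using S(1) unfolding OSR_with_sink_def by blast
  have kap: "kappa_ge E S (Suc f)" using S(1) unfolding OSR_with_sink_def by blast
  have SC: "S \<subseteq> - F" using sinkc unfolding is_sink_comp_def is_scc_def by blast
  have reachS: "(i, s) \<in> reach E (- F)" if "s \<in> S" for s
  proof (cases "i \<in> S")
    case True then show ?thesis using sinkc that unfolding is_sink_comp_def is_scc_def by blast
  next
    case False
    then have "disjoint_paths E (- F) (Suc f) i s" using S(1) assms(4) that unfolding OSR_with_sink_def by blast
    then obtain P where P: "finite P" "Suc f \<le> card P"
      "\<forall>p\<in>P. is_path E p \<and> set p \<subseteq> - F \<and> hd p = i \<and> last p = s"
      unfolding disjoint_paths_def by blast
    then have "P \<noteq> {}" by auto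
    then obtain p where "p \<in> P" by blast
    then show ?thesis using P path_reach[of E p "- F"] unfolding is_path_def by auto
  qed
  have "\<forall>s\<in>S. \<exists>T. (s, PD s) \<in> spd T i"
  proof
    fix s assume "s \<in> S"
    then show "\<exists>T. (s, PD s) \<in> spd T i" using reachT[OF reachS[OF \<open>s \<in> S\<close>]] assms(4) by simp
  qed
  then obtain Tf where Tf: "\<And>s. s \<in> S \<Longrightarrow> (s, PD s) \<in> spd (Tf s) i" by metis
  define T where "T = Max (Tf ` S)"
  have allS: "(s, PD s) \<in> spd T i" if "s \<in> S" for s
  proof -
    have "Tf s \<le> T" unfolding T_def using that by (simp add: Max_ge)
    then show ?thesis using spd_mono[of "Tf s" T i] Tf[OF that] assms(4) by auto
  qed
  define E' where "E' = pd_graph (spd T i)"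
  have RS: "S \<subseteq> rcvd T i" using allS rcvd_inv[of i T] assms(4) by force
  have "E \<inter> S \<times> S \<subseteq> E'"
    using allS unfolding E_def E'_def Gdi_edges_def pd_graph_def by auto
  then have kap': "kappa_ge E' S (Suc f)"
    using kap dp_mono[of E S "Suc f" _ _ E'] unfolding kappa_ge_def by blast
  have edgeE': "\<forall>a\<in>S. \<forall>b. (a, b) \<in> E' \<longrightarrow> b \<in> S \<or> b \<in> F"
  proof (intro ballI allI impI)
    fix a b assume a: "a \<in> S" "(a, b) \<in> E'"
    then obtain X where X: "(a, X) \<in> spd T i" "b \<in> X" unfolding E'_def pd_graph_def by auto
    then have "X = PD a" using sigi[OF _ X(1)] assms(4) SC a by auto
    then have "(a, b) \<in> E" using X unfolding E_def Gdi_edges_def by auto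
    then show "b \<in> S \<or> b \<in> F" using sinkc a unfolding is_sink_comp_def by auto
  qed
  have cond2: "card K \<le> f" if K: "K \<subseteq> (known T i \<union> rcvd T i) - S" "receives_paths E' S K (Suc f)" for K
  proof -
    have "K \<subseteq> F"
    proof
      fix v assume vK: "v \<in> K"
      show "v \<in> F"
      proof (rule ccontr)
        assume vF: "v \<notin> F"
        obtain P where P: "finite P" "Suc f \<le> card P"
          "\<forall>p\<in>P. is_path E' p \<and> hd p \<in> S \<and> last p = v"
          "\<forall>p\<in>P. \<forall>q\<in>P. p \<noteq> q \<longrightarrow> set p \<inter> set q \<subseteq> {v}"
          using K(2) vK unfolding receives_paths_def by blast
        have "v \<notin> S" using K vK by auto
        have ex: "\<forall>p\<in>P. \<exists>b\<in>set p. b \<in> F"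
        proof
          fix p assume "p \<in> P"
          then have "successively (\<lambda>x y. (x, y) \<in> E') p" "p \<noteq> []" "hd p \<in> S" "last p \<notin> S"
            using P(3) \<open>v \<notin> S\<close> unfolding is_path_def by auto
          then show "\<exists>b\<in>set p. b \<in> F" using path_exits[of E' p S F] edgeE' by blast
        qed
        define g where "g p = (SOME b. b \<in> set p \<and> b \<in> F)" for p
        have g: "g p \<in> set p \<and> g p \<in> F" if "p \<in> P" for p
          unfolding g_def using ex that by (metis (mono_tags, lifting) someI_ex)
        have "inj_on g P"
        proof (rule inj_onI)
          fix p q assume pq: "p \<in> P" "q \<in> P" "g p = g q"
          show "p = q"
          proof (rule ccontr)
            assume "p \<noteq> q"
            then have "set p \<inter> set q \<subseteq> {v}" using P(4) pq(1,2) by blast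
            moreover have "g p \<in> set p" "g p \<in> set q" using g[OF pq(1)] g[OF pq(2)] pq(3) by auto
            ultimately have "g p \<in> {v}" by blast
            then show False using g[OF pq(1)] vF by auto
          qed
        qed
        then have "card P \<le> card F" using card_inj_on_le[of g P F] g by (simp add: image_subset_iff)
        then show False using P(2) assms(1) by auto
      qed
    qed
    then show ?thesis using card_mono[of F K] assms(1) by auto
  qed
  have "sink_wait_cond f (spd T i) (known T i) (rcvd T i)"
    unfolding sink_wait_cond_def
  proof (intro exI conjI allI impI)
    show "S \<subseteq> rcvd T i" by (rule RS)
    show "kappa_ge (pd_graph (spd T i)) S (Suc f)" using kap' unfolding E'_def .
  next
    fix K assume "K \<subseteq> known T i \<union> rcvd T i - S" "receives_paths (pd_graph (spd T i)) S K (Suc f)"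
    then show "card K \<le> f" using cond2 unfolding E'_def by blast
  qed
  then show ?thesis by blast
qed

end
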